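(* If $p,q\in\mathbb{C}[\lambda]$, then for all $m\in\mathcal{A}$ and $u,v\in\mathcal{A}\bar\otimes\mathcal{A}^{\mathrm{op}}$, \[ \Delta_{u,v}(pq)(m)=\Delta_{u,v}p(m)\,q(m)+p(m)\,\Delta_{u,v}q(m)+Q_\tau(\partial p(m)\,u,\partial q(m)\,v)+Q_\tau(\partial p(m)\,v,\partial q(m)\,u). \]
   Context: $(\mathcal{A},\tau)$ is a von Neumann algebra with faithful normal tracial state $\tau$; $\mathcal{A}^{\mathrm{op}}$ is its opposite algebra; $\mathcal{A}\bar\otimes\mathcal{A}^{\mathrm{op}}$ the von Neumann tensor product with trace $\tau\bar\otimes\tau^{\mathrm{op}}$ (products such as $\partial p(m)u$ are taken there); $(a\otimes b)^{\mathrm{flip}}=b\otimes a$ extended $\sigma$-weakly continuously. For $u,v\in\mathcal{A}\bar\otimes\mathcal{A}^{\mathrm{op}}$, $Q_\tau(u,v)$ is the unique element of $\mathcal{A}$ with $\tau(aQ_\tau(u,v))=(\tau\bar\otimes\tau^{\mathrm{op}})((a\otimes1)uv^{\mathrm{flip}})$ for all $a\in\mathcal{A}$. For $p(\lambda)=\sum_ic_i\lambda^i$: $\partial p(m)=\sum_ic_i\sum_{\delta_1+\delta_2=i-1}m^{\delta_1}\otimes m^{\delta_2}$, and $\Delta_{u,v}p(m)$ is the unique element of $\mathcal{A}$ such that for all $a\in\mathcal{A}$ \[ \tau(a\,\Delta_{u,v}p(m))=\sum_ic_i\sum_{\delta_1+\delta_2+\delta_3=i-2}(\tau\bar\otimes\tau^{\mathrm{op}})\big((a\otimes1)(m\otimes1)^{\delta_1}(uv^{\mathrm{flip}}+vu^{\mathrm{flip}})(1\otimes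 m)^{\delta_2}(m\otimes1)^{\delta_3}\big). \] *)

theory Defs
  imports Complex_Main "HOL-Computational_Algebra.Polynomial"
begin

text \<open>Abstract (algebraic) rendering of the standing setting: a complex *-algebra 'a
 (complex scalars via a central unital ring homomorphism emb) with a faithful tracial
 state tau, and an algebra 'b standing for the von Neumann tensor product of 'a with
 its opposite algebra, with the elementary tensors tens a b (so that
 tens a b * tens c d = tens (a*c) (d*b)), the flip map and the trace Tr = tau (x) tau^op.
 The last axiom is the existence of the elements whose uniqueness (from faithfulness)
 makes Q_tau and Delta well defined.\<close>

definition tracial_tensor_setting ::
  "(complex \<Rightarrow> 'a::ring_1) \<Rightarrow> ('a \<Rightarrow> 'a) \<Rightarrow> ('a \<Rightarrow> complex) \<Rightarrow>
   ('a \<Rightarrow> 'a \<Rightarrow> 'b::ring_1) \<Rightarrow> ('b \<Rightarrow> 'b) \<Rightarrow> ('b \<Rightarrow> complex) \<Rightarrow> bool" where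
  "tracial_tensor_setting emb st \<tau> tens flip Tr \<longleftrightarrow>
     \<comment> \<open>complex algebra structure\<close>
     (\<forall>a b. emb (a + b) = emb a + emb b) \<and>
     (\<forall>a b. emb (a * b) = emb a * emb b) \<and>
     emb 1 = 1 \<and>
     (\<forall>c x. emb c * x = x * emb c) \<and>
     \<comment> \<open>involution\<close>
     (\<forall>x y. st (x + y) = st x + st y) \<and>
     (\<forall>x y. st (x * y) = st y * st x) \<and>
     (\<forall>x. st (st x) = x) \<and>
     (\<forall>c. st (emb c) = emb (cnj c)) \<and>
     \<comment> \<open>faithful tracial state\<close>
     (\<forall>x y. \<tau> (x + y) = \<tau> x + \<tau> y) \<and>
     (\<forall>c x. \<tau> (emb c * x) = c * \<tau> x) \<and>
     \<tau> 1 = 1 \<and>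
     (\<forall>x y. \<tau> (x * y) = \<tau> (y * x)) \<and>
     (\<forall>x. Im (\<tau> (st x * x)) = 0 \<and> Re (\<tau> (st x * x)) \<ge> 0) \<and>
     (\<forall>x. \<tau> (st x * x) = 0 \<longrightarrow> x = 0) \<and>
     \<comment> \<open>elementary tensors in A (x) A^op\<close>
     (\<forall>x y z. tens (x + y) z = tens x z + tens y z) \<and>
     (\<forall>x y z. tens x (y + z) = tens x y + tens x z) \<and>
     (\<forall>c x y. tens (emb c * x) y = tens x (emb c * y)) \<and>
     tens 1 1 = 1 \<and>
     (\<forall>a b c d. tens a b * tens c d = tens (a * c) (d * b)) \<and>
     (\<forall>c z. tens (emb c) 1 * z = z * tens (emb c) 1) \<and>
     \<comment> \<open>flip\<close>
     (\<forall>x y. flip (x + y) = flip x + flip y) \<and>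
     (\<forall>a b. flip (tens a b) = tens b a) \<and>
     (\<forall>x y. flip (x * y) = flip y * flip x) \<and>
     (\<forall>x. flip (flip x) = x) \<and>
     \<comment> \<open>trace tau (x) tau^op\<close>
     (\<forall>x y. Tr (x + y) = Tr x + Tr y) \<and>
     (\<forall>c z. Tr (tens (emb c) 1 * z) = c * Tr z) \<and>
     (\<forall>a b. Tr (tens a b) = \<tau> a * \<tau> b) \<and>
     (\<forall>x y. Tr (x * y) = Tr (y * x)) \<and>
     \<comment> \<open>existence of the representing elements (conditional expectation)\<close>
     (\<forall>X. \<exists>x. \<forall>a. \<tau> (a * x) = Tr (tens a 1 * X))"

definition peval :: "(complex \<Rightarrow> 'a::ring_1) \<Rightarrow> complex poly \<Rightarrow> 'a \<Rightarrow> 'a" where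
  "peval emb p m = (\<Sum>i\<le>degree p. emb (coeff p i) * m ^ i)"

definition pdiff :: "(complex \<Rightarrow> 'a::ring_1) \<Rightarrow> ('a \<Rightarrow> 'a \<Rightarrow> 'b::ring_1) \<Rightarrow> complex poly \<Rightarrow> 'a \<Rightarrow> 'b" where
  "pdiff emb tens p m =
     (\<Sum>i\<le>degree p. \<Sum>(d1, d2)\<in>{(x, y). x + y + 1 = i}. tens (emb (coeff p i) * m ^ d1) (m ^ d2))"

definition Qtau :: "('a::ring_1 \<Rightarrow> complex) \<Rightarrow> ('b::ring_1 \<Rightarrow> complex) \<Rightarrow> ('a \<Rightarrow> 'a \<Rightarrow> 'b) \<Rightarrow> ('b \<Rightarrow> 'b) \<Rightarrow> 'b \<Rightarrow> 'b \<Rightarrow> 'a" where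
  "Qtau \<tau> Tr tens flip u v = (THE x. \<forall>a. \<tau> (a * x) = Tr (tens a 1 * u * flip v))"

definition Delta :: "('a::ring_1 \<Rightarrow> complex) \<Rightarrow> ('b::ring_1 \<Rightarrow> complex) \<Rightarrow> ('a \<Rightarrow> 'a \<Rightarrow> 'b) \<Rightarrow> ('b \<Rightarrow> 'b) \<Rightarrow>
    'b \<Rightarrow> 'b \<Rightarrow> complex poly \<Rightarrow> 'a \<Rightarrow> 'a" where
  "Delta \<tau> Tr tens flip u v p m = (THE x. \<forall>a. \<tau> (a * x) =
     (\<Sum>i\<le>degree p. coeff p i *
        (\<Sum>(d1, d2, d3)\<in>{(x, y, z). x + y + z + 2 = i}.
           Tr (tens a 1 * (tens m 1) ^ d1 * (u * flip v + v * flip u) * (tens 1 m) ^ d2 * (tens m 1) ^ d3))))"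

end

theory Submission
  imports Defs
begin


lemma sum_deg_ext:
  fixes p :: "complex poly" and X :: "nat \<Rightarrow> complex"
  assumes "degree p \<le> N"
  shows "(\<Sum>n\<le>degree p. coeff p n * X n) = (\<Sum>n\<le>N. coeff p n * X n)"
  by (rule sum.mono_neutral_left) (auto simp: coeff_eq_0 assms)

lemma sum_poly_mult:
  fixes p q :: "complex poly" and X :: "nat \<Rightarrow> complex"
  shows "(\<Sum>n\<le>degree (p*q). coeff (p*q) n * X n) =
         (\<Sum>i\<le>degree p. \<Sum>j\<le>degree q. coeff p i * coeff q j * X (i+j))"
proof -
  let ?f = "\<lambda>i j. coeff p i * coeff q j * X (i+j)"
  have "(\<Sum>n\<le>degree (p*q). coeff (p*q) n * X n) = (\<Sum>n\<le>degree p + degree q. coeff (p*q) n * X n)"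
    by (rule sum_deg_ext) (rule degree_mult_le)
  also have "\<dots> = (\<Sum>n\<le>degree p + degree q. \<Sum>i\<le>n. ?f i (n-i))"
    by (auto simp: coeff_mult sum_distrib_right intro!: sum.cong)
  also have "\<dots> = (\<Sum>(i,j)\<in>{(i,j). i+j \<le> degree p + degree q}. ?f i j)"
    by (rule sum.triangle_reindex_eq[symmetric])
  also have "\<dots> = (\<Sum>(i,j)\<in>{..degree p} \<times> {..degree q}. ?f i j)"
  proof (rule sum.mono_neutral_right)
    show "finite {(i,j). i+j \<le> degree p + degree q}"
    proof (rule finite_subset)
      show "{(i,j). i+j \<le> degree p + degree q} \<subseteq> {..degree p + degree q} \<times> {..degree p + degree q}" by auto
    qed auto
  qed (auto intro: le_degree)
  also have "\<dots> = (\<Sum>i\<le>degree p. \<Sum>j\<le>degree q. ?f i j)"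
    by (simp add: sum.cartesian_product)
  finally show ?thesis .
qed

definition S3 :: "nat \<Rightarrow> (nat \<times> nat \<times> nat) set" where
  "S3 n = {(x, y, z). x + y + z + 2 = n}"
definition P2 :: "nat \<Rightarrow> (nat \<times> nat) set" where
  "P2 n = {(x, y). x + y + 1 = n}"

lemma finite_S3[simp]: "finite (S3 n)"
  by (rule finite_subset[of _ "{..n} \<times> {..n} \<times> {..n}"]) (auto simp: S3_def)
lemma finite_P2[simp]: "finite (P2 n)"
  by (rule finite_subset[of _ "{..n} \<times> {..n}"]) (auto simp: P2_def)

lemma comb_identity:
  fixes G :: "nat \<Rightarrow> nat \<Rightarrow> nat \<Rightarrow> 'c::comm_monoid_add"
  shows "(\<Sum>(d1,d2,d3)\<in>S3 (i+j). G d1 d2 d3) =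
     (\<Sum>(d1,d2,d3)\<in>S3 i. G d1 d2 (d3+j)) + (\<Sum>(d1,d2,d3)\<in>S3 j. G (d1+i) d2 d3)
     + (\<Sum>(e1,e2)\<in>P2 i. \<Sum>(f1,f2)\<in>P2 j. G e1 (e2+f1) f2)"
proof -
  let ?h = "\<lambda>(x::nat,y::nat,z). (x,y,z+j)"
  let ?g = "\<lambda>(x::nat,y::nat,z). (x+i,y,z)"
  let ?k = "\<lambda>((e1::nat,e2::nat),(f1::nat,f2::nat)). (e1,e2+f1,f2)"
  define A where "A = {d\<in>S3 (i+j). snd (snd d) \<ge> j}"
  define B where "B = {d\<in>S3 (i+j). fst d \<ge> i}"
  define C where "C = {d\<in>S3 (i+j). fst d < i \<and> snd (snd d) < j}"
  have fA: "finite A" "finite B" "finite C" by (auto simp: A_def B_def C_def)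
  have U: "S3 (i+j) = A \<union> B \<union> C" by (auto simp: A_def B_def C_def S3_def)
  have D1: "(A \<union> B) \<inter> C = {}" by (auto simp: A_def B_def C_def)
  have D2: "A \<inter> B = {}" by (auto simp: A_def B_def C_def S3_def)
  have iA: "A = ?h ` S3 i"
  proof
    show "A \<subseteq> ?h ` S3 i"
    proof
      fix d assume "d \<in> A"
      then obtain x y z where d: "d = (x,y,z)" "x+y+z+2 = i+j" "z \<ge> j" by (auto simp: A_def S3_def)
      then have "(x,y,z-j) \<in> S3 i" by (auto simp: S3_def)
      moreover have "d = ?h (x,y,z-j)" using d by auto
      ultimately show "d \<in> ?h ` S3 i" by blast
    qed
  qed (auto simp: A_def S3_def)
  have iB: "B = ?g ` S3 j"
  proof
    show "B \<subseteq> ?g ` S3 j"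
    proof
      fix d assume "d \<in> B"
      then obtain x y z where d: "d = (x,y,z)" "x+y+z+2 = i+j" "x \<ge> i" by (auto simp: B_def S3_def)
      then have "(x-i,y,z) \<in> S3 j" by (auto simp: S3_def)
      moreover have "d = ?g (x-i,y,z)" using d by auto
      ultimately show "d \<in> ?g ` S3 j" by blast
    qed
  qed (auto simp: B_def S3_def)
  have iC: "C = ?k ` (P2 i \<times> P2 j)"
  proof
    show "C \<subseteq> ?k ` (P2 i \<times> P2 j)"
    proof
      fix d assume "d \<in> C"
      then obtain x y z where d: "d = (x,y,z)" "x+y+z+2 = i+j" "x < i" "z < j" by (auto simp: C_def S3_def)
      then have "((x, i - 1 - x), (y - (i - 1 - x), z)) \<in> P2 i \<times> P2 j" by (auto simp: P2_def)
      moreover have "d = ?k ((x, i - 1 - x), (y - (i - 1 - x), z))" using d by auto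
      ultimately show "d \<in> ?k ` (P2 i \<times> P2 j)" by blast
    qed
  qed (auto simp: C_def S3_def P2_def)
  have injh: "inj_on ?h (S3 i)" by (auto simp: inj_on_def)
  have injg: "inj_on ?g (S3 j)" by (auto simp: inj_on_def)
  have injk: "inj_on ?k (P2 i \<times> P2 j)" by (auto simp: inj_on_def P2_def)
  have "(\<Sum>(d1,d2,d3)\<in>S3 (i+j). G d1 d2 d3) = (\<Sum>d\<in>A. case d of (d1,d2,d3) \<Rightarrow> G d1 d2 d3)
     + (\<Sum>d\<in>B. case d of (d1,d2,d3) \<Rightarrow> G d1 d2 d3) + (\<Sum>d\<in>C. case d of (d1,d2,d3) \<Rightarrow> G d1 d2 d3)"
    unfolding U using fA D1 D2 by (simp add: sum.union_disjoint)
  also have "(\<Sum>d\<in>A. case d of (d1,d2,d3) \<Rightarrow> G d1 d2 d3) = (\<Sum>(d1,d2,d3)\<in>S3 i. G d1 d2 (d3+j))"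
    unfolding iA by (subst sum.reindex[OF injh]) (auto simp: split_def)
  also have "(\<Sum>d\<in>B. case d of (d1,d2,d3) \<Rightarrow> G d1 d2 d3) = (\<Sum>(d1,d2,d3)\<in>S3 j. G (d1+i) d2 d3)"
    unfolding iB by (subst sum.reindex[OF injg]) (auto simp: split_def)
  also have "(\<Sum>d\<in>C. case d of (d1,d2,d3) \<Rightarrow> G d1 d2 d3) = (\<Sum>(e1,e2)\<in>P2 i. \<Sum>(f1,f2)\<in>P2 j. G e1 (e2+f1) f2)"
    unfolding iC by (subst sum.reindex[OF injk]) (auto simp: split_def sum.cartesian_product)
  finally show ?thesis .
qed



locale tts =
  fixes emb :: "complex \<Rightarrow> 'a::ring_1" and st :: "'a \<Rightarrow> 'a" and \<tau> :: "'a \<Rightarrow> complex"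
    and tens :: "'a \<Rightarrow> 'a \<Rightarrow> 'b::ring_1" and flip :: "'b \<Rightarrow> 'b" and Tr :: "'b \<Rightarrow> complex"
  assumes setting: "tracial_tensor_setting emb st \<tau> tens flip Tr"
begin

lemma emb_mult: "emb (k * l) = emb k * emb l"
  using setting unfolding tracial_tensor_setting_def by (elim conjE) metis
lemma emb_central: "emb c * x = x * emb c"
  using setting unfolding tracial_tensor_setting_def by (elim conjE) metis
lemma st_mult: "st (x * y) = st y * st x"
  using setting unfolding tracial_tensor_setting_def by (elim conjE) metis
lemma tau_add: "\<tau> (x + y) = \<tau> x + \<tau> y"
  using setting unfolding tracial_tensor_setting_def by (elim conjE) metis
lemma tau_comm: "\<tau> (x * y) = \<tau> (y * x)"
  using setting unfolding tracial_tensor_setting_def by (elim conjE) metis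
lemma tau_faith: "\<tau> (st x * x) = 0 \<Longrightarrow> x = 0"
  using setting unfolding tracial_tensor_setting_def by (elim conjE) metis
lemma tens_addL: "tens (x + y) z = tens x z + tens y z"
  using setting unfolding tracial_tensor_setting_def by (elim conjE) metis
lemma tens_scal: "tens (emb c * x) y = tens x (emb c * y)"
  using setting unfolding tracial_tensor_setting_def by (elim conjE) metis
lemma tens_11: "tens 1 1 = 1"
  using setting unfolding tracial_tensor_setting_def by (elim conjE) metis
lemma tens_mult: "tens x1 x2 * tens x3 x4 = tens (x1 * x3) (x4 * x2)"
  using setting unfolding tracial_tensor_setting_def by (elim conjE) metis
lemma E_central: "tens (emb c) 1 * z' = z' * tens (emb c) 1"
  using setting unfolding tracial_tensor_setting_def by (elim conjE) metis
lemma flip_add: "flip (x' + y') = flip x' + flip y'"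
  using setting unfolding tracial_tensor_setting_def by (elim conjE) metis
lemma flip_tens: "flip (tens x1 x2) = tens x2 x1"
  using setting unfolding tracial_tensor_setting_def by (elim conjE) metis
lemma flip_mult: "flip (x' * y') = flip y' * flip x'"
  using setting unfolding tracial_tensor_setting_def by (elim conjE) metis
lemma Tr_add: "Tr (x' + y') = Tr x' + Tr y'"
  using setting unfolding tracial_tensor_setting_def by (elim conjE) metis
lemma Tr_scal: "Tr (tens (emb c) 1 * z') = c * Tr z'"
  using setting unfolding tracial_tensor_setting_def by (elim conjE) metis
lemma Tr_comm: "Tr (x' * y') = Tr (y' * x')"
  using setting unfolding tracial_tensor_setting_def by (elim conjE) metis
lemma exist: "\<exists>x. \<forall>a. \<tau> (a * x) = Tr (tens a 1 * X)"
  using setting unfolding tracial_tensor_setting_def by (elim conjE) metis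

lemma tau_diff: "\<tau> (x - y) = \<tau> x - \<tau> y"
  using tau_add[of "x - y" y] by simp

lemma unique: assumes "\<And>a. \<tau> (a * x) = \<tau> (a * y)" shows "x = y"
proof -
  have "\<tau> (st (x - y) * (x - y)) = 0"
    using assms[of "st (x - y)"] by (simp add: right_diff_distrib tau_diff)
  then show ?thesis using tau_faith[of "x - y"] by simp
qed

lemma Tr_0[simp]: "Tr 0 = 0" using Tr_add[of 0 0] by simp
lemma flip_0[simp]: "flip 0 = 0" using flip_add[of 0 0] by simp
lemma tens_0L[simp]: "tens 0 y = 0" using tens_addL[of 0 0 y] by simp

lemma Tr_sum: "Tr (sum f S) = (\<Sum>s\<in>S. Tr (f s))"
  by (induction S rule: infinite_finite_induct) (auto simp: Tr_add)
lemma flip_sum: "flip (sum f S) = (\<Sum>s\<in>S. flip (f s))"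
  by (induction S rule: infinite_finite_induct) (auto simp: flip_add)
lemma tens_sumL: "tens (sum f S) y = (\<Sum>s\<in>S. tens (f s) y)"
  by (induction S rule: infinite_finite_induct) (auto simp: tens_addL)

definition repr :: "('a \<Rightarrow> complex) \<Rightarrow> bool" where
  "repr f \<longleftrightarrow> (\<exists>X. \<forall>a. f a = Tr (tens a 1 * X))"

lemma repr_base: "repr (\<lambda>a. Tr (tens a 1 * Y))"
  unfolding repr_def by blast
lemma repr_add: "repr f \<Longrightarrow> repr g \<Longrightarrow> repr (\<lambda>a. f a + g a)"
  unfolding repr_def by (metis Tr_add distrib_left)
lemma repr_scal: "repr f \<Longrightarrow> repr (\<lambda>a. c * f a)"
  unfolding repr_def
proof (elim exE)
  fix X assume X: "\<forall>a. f a = Tr (tens a 1 * X)"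
  have "\<forall>a. c * f a = Tr (tens a 1 * (tens (emb c) 1 * X))"
    by (metis X E_central Tr_scal mult.assoc)
  then show "\<exists>X. \<forall>a. c * f a = Tr (tens a 1 * X)" by blast
qed
lemma repr_0: "repr (\<lambda>a. 0)"
  unfolding repr_def by (rule exI[of _ 0]) simp
lemma repr_sum: "(\<And>s. s \<in> S \<Longrightarrow> repr (\<lambda>a. f a s)) \<Longrightarrow> repr (\<lambda>a. sum (f a) S)"
proof (induction S rule: infinite_finite_induct)
  case (insert x F)
  then show ?case by (simp add: repr_add)
qed (simp_all add: repr_0)

lemma char_THE:
  assumes "repr f"
  shows "\<tau> (a * (THE x. \<forall>a. \<tau> (a * x) = f a)) = f a"
proof -
  obtain X where X: "\<forall>a. f a = Tr (tens a 1 * X)" using assms repr_def by blast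
  obtain x where x: "\<forall>a. \<tau> (a * x) = Tr (tens a 1 * X)" using exist by blast
  have "(THE x. \<forall>a. \<tau> (a * x) = f a) = x"
    by (rule the_equality) (use x X unique in auto)
  then show ?thesis using x X by simp
qed

lemma Qtau_char: "\<tau> (a * Qtau \<tau> Tr tens flip u v) = Tr (tens a 1 * u * flip v)"
  unfolding Qtau_def
  by (rule char_THE) (simp add: mult.assoc repr_base)

lemma Delta_char: "\<tau> (a * Delta \<tau> Tr tens flip u v p m) =
     (\<Sum>i\<le>degree p. coeff p i *
        (\<Sum>(d1, d2, d3)\<in>{(x, y, z). x + y + z + 2 = i}.
           Tr (tens a 1 * (tens m 1) ^ d1 * (u * flip v + v * flip u) * (tens 1 m) ^ d2 * (tens m 1) ^ d3)))"
  unfolding Delta_def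
  apply (rule char_THE)
  apply (intro repr_sum repr_scal)
  apply (simp add: split_def mult.assoc repr_base)
  done

end


context tts begin

definition FF :: "'b \<Rightarrow> 'b \<Rightarrow> 'a \<Rightarrow> 'a \<Rightarrow> complex" where
  "FF u v x y = Tr (tens x y * (u * flip v + v * flip u))"

lemma tens_pow1: "(tens x 1) ^ n = tens (x ^ n) 1"
  by (induction n) (simp_all add: tens_11 tens_mult)
lemma tens_pow2: "(tens 1 x) ^ n = tens 1 (x ^ n)"
  by (induction n) (simp_all add: tens_11 tens_mult power_Suc2[symmetric])

lemma term_conv:
  "Tr (tens a 1 * (tens m 1) ^ d1 * (u * flip v + v * flip u) * (tens 1 m) ^ d2 * (tens m 1) ^ d3)
   = FF u v (m ^ d3 * a * m ^ d1) (m ^ d2)"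
proof -
  let ?W = "u * flip v + v * flip u"
  have "Tr (tens a 1 * (tens m 1) ^ d1 * ?W * (tens 1 m) ^ d2 * (tens m 1) ^ d3)
      = Tr ((tens a 1 * (tens m 1) ^ d1 * ?W) * ((tens 1 m) ^ d2 * (tens m 1) ^ d3))"
    by (simp add: mult.assoc)
  also have "\<dots> = Tr (((tens 1 m) ^ d2 * (tens m 1) ^ d3) * (tens a 1 * (tens m 1) ^ d1 * ?W))"
    by (rule Tr_comm)
  also have "\<dots> = Tr (((tens 1 m) ^ d2 * (tens m 1) ^ d3 * tens a 1 * (tens m 1) ^ d1) * ?W)"
    by (simp add: mult.assoc)
  also have "(tens 1 m) ^ d2 * (tens m 1) ^ d3 * tens a 1 * (tens m 1) ^ d1 = tens (m ^ d3 * a * m ^ d1) (m ^ d2)"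
    by (simp add: tens_pow1 tens_pow2 tens_mult mult.assoc)
  finally show ?thesis by (simp add: FF_def)
qed

lemma FF_sumL: "FF u v (sum f S) y = (\<Sum>s\<in>S. FF u v (f s) y)"
  by (simp add: FF_def tens_sumL sum_distrib_right Tr_sum)

lemma FF_scal: "FF u v (emb c * x) y = c * FF u v x y"
proof -
  have "tens (emb c * x) y = tens (emb c) 1 * tens x y" by (simp add: tens_mult)
  then show ?thesis by (simp add: FF_def mult.assoc Tr_scal)
qed

lemma Delta_FF: "\<tau> (a * Delta \<tau> Tr tens flip u v p m) =
   (\<Sum>i\<le>degree p. coeff p i * (\<Sum>(d1, d2, d3)\<in>S3 i. FF u v (m ^ d3 * a * m ^ d1) (m ^ d2)))"
  unfolding Delta_char S3_def by (simp add: term_conv)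

lemma emb_comm_mult: "x * (emb c * y) = emb c * (x * y)"
  by (metis emb_central mult.assoc)

lemma peval_left: "m ^ d3 * (peval emb q m * a) * m ^ d1 =
   (\<Sum>j\<le>degree q. emb (coeff q j) * (m ^ (d3 + j) * a * m ^ d1))"
  unfolding peval_def
  by (simp add: sum_distrib_left sum_distrib_right emb_comm_mult mult.assoc power_add)

lemma peval_right: "m ^ d3 * (a * peval emb p m) * m ^ d1 =
   (\<Sum>i\<le>degree p. emb (coeff p i) * (m ^ d3 * a * m ^ (d1 + i)))"
proof -
  have "m ^ d3 * (a * (emb (coeff p i) * m ^ i)) * m ^ d1 = emb (coeff p i) * (m ^ d3 * a * m ^ (d1 + i))" for i
  proof -
    have "m ^ i * m ^ d1 = m ^ d1 * m ^ i" by (simp add: power_commutes power_add[symmetric] add.commute)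
    then show ?thesis by (simp add: emb_comm_mult mult.assoc power_add)
  qed
  then show ?thesis unfolding peval_def
    by (simp add: sum_distrib_left sum_distrib_right)
qed

end


context tts begin

lemma Pd_expand: "pdiff emb tens p m =
  (\<Sum>i\<le>degree p. \<Sum>(e1, e2)\<in>P2 i. tens (emb (coeff p i)) 1 * tens (m ^ e1) (m ^ e2))"
  unfolding pdiff_def P2_def by (simp add: tens_mult split_def)

lemma flipPd_expand: "flip (pdiff emb tens q m) =
  (\<Sum>j\<le>degree q. \<Sum>(f1, f2)\<in>P2 j. tens (emb (coeff q j)) 1 * tens (m ^ f2) (m ^ f1))"
  unfolding pdiff_def P2_def
  by (simp add: flip_sum flip_tens tens_mult split_def tens_scal[symmetric])

lemma termQ: "Tr (tens (emb d) 1 * X * A * (tens (emb c) 1 * Y) * W) = d * c * Tr (X * A * Y * W)"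
proof -
  have "tens (emb d) 1 * X * A * (tens (emb c) 1 * Y) * W = tens (emb c) 1 * (tens (emb d) 1 * (X * A * Y * W))"
    by (metis E_central mult.assoc)
  then show ?thesis by (simp add: Tr_scal)
qed

lemma termQ2: "Tr (tens (emb d) 1 * tens (m ^ f2) (m ^ f1) * tens a 1 * (tens (emb c) 1 * tens (m ^ e1) (m ^ e2)) * W)
   = d * c * Tr (tens (m ^ f2 * a * m ^ e1) (m ^ (e2 + f1)) * W)"
  by (simp only: termQ) (simp add: tens_mult power_add)

lemma Qsum: "\<tau> (a * Qtau \<tau> Tr tens flip (pdiff emb tens p m * u) (pdiff emb tens q m * v))
   + \<tau> (a * Qtau \<tau> Tr tens flip (pdiff emb tens p m * v) (pdiff emb tens q m * u))
   = (\<Sum>i\<le>degree p. \<Sum>j\<le>degree q. coeff p i * coeff q j *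
        (\<Sum>(e1, e2)\<in>P2 i. \<Sum>(f1, f2)\<in>P2 j. FF u v (m ^ f2 * a * m ^ e1) (m ^ (e2 + f1))))"
proof -
  let ?P = "pdiff emb tens p m" and ?Q = "pdiff emb tens q m" and ?W = "u * flip v + v * flip u"
  have step1: "Tr (tens a 1 * (?P * x) * flip (?Q * y)) = Tr (flip ?Q * tens a 1 * ?P * (x * flip y))" for x y
  proof -
    have "Tr (tens a 1 * (?P * x) * flip (?Q * y)) = Tr ((tens a 1 * ?P * x * flip y) * flip ?Q)"
      by (simp add: flip_mult mult.assoc)
    also have "\<dots> = Tr (flip ?Q * (tens a 1 * ?P * x * flip y))" by (rule Tr_comm)
    finally show ?thesis by (simp add: mult.assoc)
  qed
  have "?thesis \<longleftrightarrow> Tr (flip ?Q * tens a 1 * ?P * ?W) = (\<Sum>i\<le>degree p. \<Sum>j\<le>degree q. coeff p i * coeff q j *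
        (\<Sum>(e1, e2)\<in>P2 i. \<Sum>(f1, f2)\<in>P2 j. FF u v (m ^ f2 * a * m ^ e1) (m ^ (e2 + f1))))"
    by (simp add: Qtau_char step1 Tr_add[symmetric] distrib_left)
  moreover have "Tr (flip ?Q * tens a 1 * ?P * ?W) = (\<Sum>i\<le>degree p. \<Sum>(e1, e2)\<in>P2 i. \<Sum>j\<le>degree q. \<Sum>(f1, f2)\<in>P2 j.
        coeff q j * coeff p i * FF u v (m ^ f2 * a * m ^ e1) (m ^ (e2 + f1)))"
    unfolding flipPd_expand unfolding Pd_expand
    by (simp add: sum_distrib_left sum_distrib_right Tr_sum split_def termQ2 FF_def)
  moreover have "(\<Sum>i\<le>degree p. \<Sum>(e1, e2)\<in>P2 i. \<Sum>j\<le>degree q. \<Sum>(f1, f2)\<in>P2 j.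
        coeff q j * coeff p i * FF u v (m ^ f2 * a * m ^ e1) (m ^ (e2 + f1)))
      = (\<Sum>i\<le>degree p. \<Sum>j\<le>degree q. coeff p i * coeff q j *
        (\<Sum>(e1, e2)\<in>P2 i. \<Sum>(f1, f2)\<in>P2 j. FF u v (m ^ f2 * a * m ^ e1) (m ^ (e2 + f1))))"
    apply (simp add: sum_distrib_left split_def)
    apply (rule sum.cong, rule refl)
    apply (subst sum.swap)
    apply (simp add: mult_ac)
    done
  ultimately show ?thesis by simp
qed

end


context tts begin

lemma main:
  "Delta \<tau> Tr tens flip u v (p * q) m =
           Delta \<tau> Tr tens flip u v p m * peval emb q m
         + peval emb p m * Delta \<tau> Tr tens flip u v q m
         + Qtau \<tau> Tr tens flip (pdiff emb tens p m * u) (pdiff emb tens q m * v)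
         + Qtau \<tau> Tr tens flip (pdiff emb tens p m * v) (pdiff emb tens q m * u)"
proof (rule unique)
  fix a
  define G where "G d1 d2 d3 = FF u v (m ^ d3 * a * m ^ d1) (m ^ d2)" for d1 d2 d3
  let ?c = "coeff p" and ?d = "coeff q"
  let ?Dp = "Delta \<tau> Tr tens flip u v p m" and ?Dq = "Delta \<tau> Tr tens flip u v q m"
  let ?Q1 = "Qtau \<tau> Tr tens flip (pdiff emb tens p m * u) (pdiff emb tens q m * v)"
  let ?Q2 = "Qtau \<tau> Tr tens flip (pdiff emb tens p m * v) (pdiff emb tens q m * u)"
  have L: "\<tau> (a * Delta \<tau> Tr tens flip u v (p * q) m) =
     (\<Sum>i\<le>degree p. \<Sum>j\<le>degree q. ?c i * ?d j * (\<Sum>(d1, d2, d3)\<in>S3 (i + j). G d1 d2 d3))"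
    unfolding Delta_FF G_def by (rule sum_poly_mult)
  have R1: "\<tau> (a * (?Dp * peval emb q m)) =
     (\<Sum>i\<le>degree p. \<Sum>j\<le>degree q. ?c i * ?d j * (\<Sum>(d1, d2, d3)\<in>S3 i. G d1 d2 (d3 + j)))"
  proof -
    have "\<tau> (a * (?Dp * peval emb q m)) = \<tau> ((peval emb q m * a) * ?Dp)"
      by (metis tau_comm mult.assoc)
    also have "\<dots> = (\<Sum>i\<le>degree p. ?c i * (\<Sum>(d1, d2, d3)\<in>S3 i. \<Sum>j\<le>degree q. ?d j * G d1 d2 (d3 + j)))"
      unfolding Delta_FF peval_left G_def by (simp add: FF_sumL FF_scal)
    also have "\<dots> = (\<Sum>i\<le>degree p. \<Sum>j\<le>degree q. ?c i * ?d j * (\<Sum>(d1, d2, d3)\<in>S3 i. G d1 d2 (d3 + j)))"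
      apply (rule sum.cong, rule refl)
      apply (simp add: split_def sum_distrib_left)
      apply (subst sum.swap)
      apply (simp add: mult_ac)
      done
    finally show ?thesis .
  qed
  have R2: "\<tau> (a * (peval emb p m * ?Dq)) =
     (\<Sum>i\<le>degree p. \<Sum>j\<le>degree q. ?c i * ?d j * (\<Sum>(d1, d2, d3)\<in>S3 j. G (d1 + i) d2 d3))"
  proof -
    have "\<tau> (a * (peval emb p m * ?Dq)) = \<tau> ((a * peval emb p m) * ?Dq)"
      by (simp add: mult.assoc)
    also have "\<dots> = (\<Sum>j\<le>degree q. ?d j * (\<Sum>(d1, d2, d3)\<in>S3 j. \<Sum>i\<le>degree p. ?c i * G (d1 + i) d2 d3))"
      unfolding Delta_FF peval_right G_def by (simp add: FF_sumL FF_scal)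
    also have "\<dots> = (\<Sum>j\<le>degree q. \<Sum>i\<le>degree p. ?c i * ?d j * (\<Sum>(d1, d2, d3)\<in>S3 j. G (d1 + i) d2 d3))"
      apply (rule sum.cong, rule refl)
      apply (simp add: split_def sum_distrib_left)
      apply (subst sum.swap)
      apply (simp add: mult_ac)
      done
    also have "\<dots> = (\<Sum>i\<le>degree p. \<Sum>j\<le>degree q. ?c i * ?d j * (\<Sum>(d1, d2, d3)\<in>S3 j. G (d1 + i) d2 d3))"
      by (rule sum.swap)
    finally show ?thesis .
  qed
  have R3: "\<tau> (a * ?Q1) + \<tau> (a * ?Q2) =
     (\<Sum>i\<le>degree p. \<Sum>j\<le>degree q. ?c i * ?d j * (\<Sum>(e1, e2)\<in>P2 i. \<Sum>(f1, f2)\<in>P2 j. G e1 (e2 + f1) f2))"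
    unfolding Qsum G_def by simp
  have "\<tau> (a * (?Dp * peval emb q m + peval emb p m * ?Dq + ?Q1 + ?Q2))
     = \<tau> (a * (?Dp * peval emb q m)) + \<tau> (a * (peval emb p m * ?Dq)) + (\<tau> (a * ?Q1) + \<tau> (a * ?Q2))"
    by (simp add: distrib_left tau_add)
  also have "\<dots> = (\<Sum>i\<le>degree p. \<Sum>j\<le>degree q. ?c i * ?d j * (\<Sum>(d1, d2, d3)\<in>S3 (i + j). G d1 d2 d3))"
    unfolding R1 R2 R3 comb_identity
    by (simp add: sum.distrib[symmetric] distrib_left)
  finally show "\<tau> (a * Delta \<tau> Tr tens flip u v (p * q) m) =
     \<tau> (a * (?Dp * peval emb q m + peval emb p m * ?Dq + ?Q1 + ?Q2))"
    using L by simp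
qed

end

theorem lemma3p4p3:
  fixes emb :: "complex \<Rightarrow> 'a::ring_1" and st :: "'a \<Rightarrow> 'a" and \<tau> :: "'a \<Rightarrow> complex"
    and tens :: "'a \<Rightarrow> 'a \<Rightarrow> 'b::ring_1" and flip :: "'b \<Rightarrow> 'b" and Tr :: "'b \<Rightarrow> complex"
    and p q :: "complex poly" and m :: 'a and u v :: 'b
  assumes "tracial_tensor_setting emb st \<tau> tens flip Tr"
  shows "Delta \<tau> Tr tens flip u v (p * q) m =
           Delta \<tau> Tr tens flip u v p m * peval emb q m
         + peval emb p m * Delta \<tau> Tr tens flip u v q m
         + Qtau \<tau> Tr tens flip (pdiff emb tens p m * u) (pdiff emb tens q m * v)
         + Qtau \<tau> Tr tens flip (pdiff emb tens p m * v) (pdiff emb tens q m * u)"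
proof -
  interpret tts emb st \<tau> tens flip Tr by (rule tts.intro) (rule assms)
  show ?thesis by (rule main)
qed

end
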